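(* Let $d\ge2$ and consider the cubical cell structure on $\mathbb{R}^d$ given by $\mathbb{Z}^d$. For all $(d-1)$-cells $c,c'$, $$S_cS_{c'}=S_{c'}S_c\,(-1)^{\int\boldsymbol c\cup_{d-2}\boldsymbol c'+\boldsymbol c'\cup_{d-2}\boldsymbol c}$$ and $$U_cU_{c'}=U_{c'}U_c\,(-1)^{\int\boldsymbol c\cup_{d-2}\boldsymbol c'+\boldsymbol c'\cup_{d-2}\boldsymbol c},$$ where $S_c$ and $U_c$ are the operators defined in the context.
   Context: Cells: the $k$-cells are integer translates of faces of unit cubes of $\mathbb{Z}^d$. For a $k$-cell $c$ spanning directions $i_1<\dots<i_k$, its subcells are $c(w)$ for $w\in\{+,-,\bullet\}^k$: $w_r=\pm$ fixes $x_{i_r}$ at its max/min on $c$, and $w_r=\bullet$ leaves it free. A $\mathbb{Z}_2$-valued $p$-cochain is a function from $p$-cells to $\mathbb{Z}_2$, zero on other cells. $\boldsymbol c$ denotes the indicator cochain of the cell $c$. $\int\phi$ of a $d$-cochain $\phi$ is $\sum_{d\text{-cells}}\phi$ mod 2. Higher cup products: for a $p$-cochain $\alpha$, a $q$-cochain $\beta$, and a $k$-cell $c$ with $k=p+q-m$, $$(\alpha\cup_m\beta)(c)=\sum_{1\le l_1<\dots<l_m\le k}\sum_{(w,w')}\alpha(c(w))\beta(c(w')).$$ The inner sum runs over pairs with $w_{l_r}=w'_{l_r}=\bullet$. At every other position $s$, with $\ell(s)=\#\{r:l_r<s\}$ and $\sigma_s=(-1)^{\ell(s)}\in\{\pm\}$,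 one has $(w_s,w'_s)\in\{(\sigma_s,\bullet),(\bullet,-\sigma_s)\}$. Faces of the wrong dimension contribute zero. Fermions: each $d$-cell $C$ carries two Majorana operators $\gamma_C,\gamma'_C$. All of them are Hermitian, square to $1$ and pairwise anticommute. For a $(d-1)$-cell $c$ perpendicular to the $x_i$-direction, let ${}^\pm c$ be the $d$-cell adjacent to $c$ in the $\pm x_i$ direction. Set $(L(c),R(c))=({}^-c,{}^+c)$ if $i+d$ is odd, and $(L(c),R(c))=({}^+c,{}^-c)$ if $i+d$ is even. Define $S_c=i\gamma_{L(c)}\gamma'_{R(c)}$. Bosons: each $(d-1)$-cell $c$ carries a qubit with Pauli operators $X_c,Z_c$ (operators on distinct cells commute). Define $$U_c=X_c\prod_{c'}Z_{c'}^{\int\boldsymbol c'\cup_{d-2}\boldsymbol c},$$ with the product over all $(d-1)$-cells $c'$. *)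

theory Defs
  imports Main
begin

text \<open>A cell of the cubical structure on R^d given by Z^d: a pair (x, S) where
  x is the (integer) minimal corner and S \<subseteq> {1..d} is the set of spanning
  directions; the cell is x + [0,1]^S.  Coordinates are indexed 1..d, and x is
  normalised to 0 outside {1..d}.\<close>
type_synonym cell = "(nat \<Rightarrow> int) \<times> nat set"

definition is_cell :: "nat \<Rightarrow> nat \<Rightarrow> cell \<Rightarrow> bool" where
  "is_cell d k c \<longleftrightarrow> snd c \<subseteq> {1..d} \<and> card (snd c) = k \<and>
     (\<forall>i. i \<notin> {1..d} \<longrightarrow> fst c i = 0)"

text \<open>Z2-valued cochains are represented as functions cell => nat with values in {0,1}.\<close>
definition ind :: "cell \<Rightarrow> cell \<Rightarrow> nat" where
  "ind c = (\<lambda>c'. if c' = c then 1 else 0)"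

text \<open>ell L s = number of elements of L below s; sigma_s = + iff ell L s is even.\<close>
definition ell :: "nat set \<Rightarrow> nat \<Rightarrow> nat" where
  "ell L s = card {l \<in> L. l < s}"

text \<open>Subcell with the coordinates in F fixed: direction i in F is fixed at its
  max (+) if P i, at its min (-) otherwise; other directions remain free.\<close>
definition subcell :: "cell \<Rightarrow> nat set \<Rightarrow> (nat \<Rightarrow> bool) \<Rightarrow> cell" where
  "subcell c F P = ((\<lambda>i. if i \<in> F \<and> P i then fst c i + 1 else fst c i), snd c - F)"

text \<open>Positions l_1<...<l_m are identified with the
  subset L of spanning directions (the order-preserving correspondence), and
  for each s not in L the choice (w_s,w'_s) = (sigma_s, free) is encoded by s \<in> T,
  the choice (free, -sigma_s) by s \<in> S - L - T.\<close>
definition cup :: "nat \<Rightarrow> (cell \<Rightarrow> nat) \<Rightarrow> (cell \<Rightarrow> nat) \<Rightarrow> cell \<Rightarrow> nat" where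
  "cup m \<alpha> \<beta> c =
     (\<Sum>L \<in> {L. L \<subseteq> snd c \<and> card L = m}. \<Sum>T \<in> Pow (snd c - L).
        \<alpha> (subcell c T (\<lambda>s. even (ell L s))) *
        \<beta> (subcell c (snd c - L - T) (\<lambda>s. odd (ell L s)))) mod 2"

definition integral_d :: "nat \<Rightarrow> (cell \<Rightarrow> nat) \<Rightarrow> nat" where
  "integral_d d \<phi> = card {C. is_cell d d C \<and> odd (\<phi> C)} mod 2"

definition cupint :: "nat \<Rightarrow> cell \<Rightarrow> cell \<Rightarrow> nat" where
  "cupint d c c' = integral_d d (cup (d - 2) (ind c) (ind c'))"

definition perp :: "nat \<Rightarrow> cell \<Rightarrow> nat" where
  "perp d c = (THE i. i \<in> {1..d} \<and> i \<notin> snd c)"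

definition adj_plus :: "nat \<Rightarrow> cell \<Rightarrow> cell" where
  "adj_plus d c = (fst c, {1..d})"

definition adj_minus :: "nat \<Rightarrow> cell \<Rightarrow> cell" where
  "adj_minus d c = ((fst c)(perp d c := fst c (perp d c) - 1), {1..d})"

definition Lc :: "nat \<Rightarrow> cell \<Rightarrow> cell" where
  "Lc d c = (if odd (perp d c + d) then adj_minus d c else adj_plus d c)"

definition Rc :: "nat \<Rightarrow> cell \<Rightarrow> cell" where
  "Rc d c = (if odd (perp d c + d) then adj_plus d c else adj_minus d c)"

definition Sop :: "nat \<Rightarrow> 'a::ring_1 \<Rightarrow> (cell \<Rightarrow> 'a) \<Rightarrow> (cell \<Rightarrow> 'a) \<Rightarrow> cell \<Rightarrow> 'a" where
  "Sop d iu \<gamma> \<gamma>' c = iu * (\<gamma> (Lc d c) * \<gamma>' (Rc d c))"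

text \<open>Product of pairwise commuting factors indexed by a finite set (order irrelevant).\<close>
definition cprod :: "(cell \<Rightarrow> 'b::ring_1) \<Rightarrow> cell set \<Rightarrow> 'b" where
  "cprod f A = foldr (\<lambda>c acc. f c * acc) (SOME xs. set xs = A \<and> distinct xs) 1"

definition Uop :: "nat \<Rightarrow> (cell \<Rightarrow> 'b::ring_1) \<Rightarrow> (cell \<Rightarrow> 'b) \<Rightarrow> cell \<Rightarrow> 'b" where
  "Uop d X Z c = X c * cprod Z {c'. is_cell d (d - 1) c' \<and> cupint d c' c = 1}"

end

theory Submission
  imports Defs
begin


lemma dcell_iff: "is_cell d d C \<longleftrightarrow> snd C = {1..d} \<and> (\<forall>i. i \<notin> {1..d} \<longrightarrow> fst C i = 0)"
  unfolding is_cell_def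
  by (metis card_atLeastAtMost card_subset_eq diff_Suc_1 finite_atLeastAtMost order_refl)

lemma d1cell_perp:
  assumes "is_cell d (d - 1) c" "d \<ge> 1"
  obtains i where "i \<in> {1..d}" "snd c = {1..d} - {i}" "perp d c = i"
proof -
  have sub: "snd c \<subseteq> {1..d}" and cd: "card (snd c) = d - 1" using assms unfolding is_cell_def by auto
  have "card ({1..d} - snd c) = 1" using sub cd assms(2) by (simp add: card_Diff_subset finite_subset)
  then obtain i where i: "{1..d} - snd c = {i}" by (meson card_1_singletonE)
  hence iS: "i \<in> {1..d}" by auto
  have sc: "snd c = {1..d} - {i}" using i sub by blast
  have "perp d c = i" unfolding perp_def
    by (rule the_equality) (use iS sc in auto)
  thus ?thesis using that iS sc by blast
qed

lemma subcell_single: "subcell C {i} P = ((fst C)(i := fst C i + (if P i then 1 else 0)), snd C - {i})"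
  by (auto simp: subcell_def fun_eq_iff)

lemma ind_mult: "ind c x * ind c' y = (if x = c \<and> y = c' then 1 else 0)"
  by (simp add: ind_def)

lemma cup_eval:
  assumes d: "d \<ge> 2" and i: "i \<in> {1..d}" and j: "j \<in> {1..d}"
    and sc: "snd c = {1..d} - {i}" and sc': "snd c' = {1..d} - {j}" and sC: "snd C = {1..d}"
  shows "cup (d-2) (ind c) (ind c') C =
    (if i \<noteq> j \<and> subcell C {i} (\<lambda>s. even (ell ({1..d}-{i,j}) s)) = c
         \<and> subcell C {j} (\<lambda>s. odd (ell ({1..d}-{i,j}) s)) = c' then 1 else 0)"
proof -
  define S where "S = {1..d}"
  define L0 where "L0 = S - {i,j}"
  define f where "f L T = ind c (subcell C T (\<lambda>s. even (ell L s))) *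
        ind c' (subcell C (S - L - T) (\<lambda>s. odd (ell L s)))" for L T
  define v where "v = f L0 {i}"
  have fz: "f L T = (if L = L0 \<and> T = {i} \<and> i \<noteq> j then v else 0)"
    if L: "L \<subseteq> S" and T: "T \<subseteq> S - L" for L T
  proof (cases "f L T = 0")
    case True
    then show ?thesis using v_def by auto
  next
    case False
    hence e1: "subcell C T (\<lambda>s. even (ell L s)) = c" and e2: "subcell C (S - L - T) (\<lambda>s. odd (ell L s)) = c'"
      unfolding f_def ind_def by (auto split: if_splits)
    have "snd C - T = snd c" using arg_cong[OF e1, of snd] by (simp add: subcell_def)
    hence "S - T = S - {i}" using sc sC unfolding S_def by simp
    hence Ti: "T = {i}" using T i unfolding S_def by blast
    have "snd C - (S - L - T) = snd c'" using arg_cong[OF e2, of snd] by (simp add: subcell_def)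
    hence "S - (S - L - T) = S - {j}" using sc' sC unfolding S_def by simp
    hence "L \<union> {i} = S - {j}" using Ti L T by blast
    hence "i \<noteq> j" "L = L0" using Ti T unfolding L0_def by blast+
    then show ?thesis using Ti v_def by simp
  qed
  have finP: "finite {L. L \<subseteq> S \<and> card L = d - 2}"
    by (rule finite_subset[of _ "Pow S"]) (auto simp: S_def)
  have L0in: "L0 \<in> {L. L \<subseteq> S \<and> card L = d - 2}" if "i \<noteq> j"
  proof -
    have "card L0 = card S - card {i,j}" unfolding L0_def
      by (rule card_Diff_subset) (use i j in \<open>auto simp: S_def\<close>)
    thus ?thesis using that unfolding L0_def S_def by auto
  qed
  have "cup (d-2) (ind c) (ind c') C =
     (\<Sum>L \<in> {L. L \<subseteq> S \<and> card L = d - 2}. \<Sum>T \<in> Pow (S - L). f L T) mod 2"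
    unfolding cup_def f_def S_def sC by simp
  also have "\<dots> = (\<Sum>L \<in> {L. L \<subseteq> S \<and> card L = d - 2}. \<Sum>T \<in> Pow (S - L).
        (if L = L0 \<and> T = {i} \<and> i \<noteq> j then v else 0)) mod 2"
    by (intro arg_cong[where f="\<lambda>x. x mod 2"] sum.cong refl) (use fz in auto)
  also have "\<dots> = (\<Sum>L \<in> {L. L \<subseteq> S \<and> card L = d - 2}.
        (if L = L0 \<and> i \<noteq> j then v else 0)) mod 2"
  proof -
    have "(\<Sum>T \<in> Pow (S - L). (if L = L0 \<and> T = {i} \<and> i \<noteq> j then v else 0)) =
          (if L = L0 \<and> i \<noteq> j then v else 0)" for L
    proof (cases "L = L0 \<and> i \<noteq> j")
      case True
      hence "{i} \<in> Pow (S - L)" using i unfolding L0_def S_def by auto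
      thus ?thesis using True by (simp add: S_def)
    next
      case False
      hence "\<And>T. (if L = L0 \<and> T = {i} \<and> i \<noteq> j then v else 0) = (0::nat)" by auto
      thus ?thesis using False by (simp only: sum.neutral_const if_False)
    qed
    thus ?thesis by simp
  qed
  also have "\<dots> = (if i \<noteq> j then v else 0) mod 2"
    using L0in finP by (cases "i = j") (auto simp: sum.delta)
  also have "\<dots> = (if i \<noteq> j then v else 0)"
    unfolding v_def f_def ind_mult by auto
  also have "\<dots> = (if i \<noteq> j \<and> subcell C {i} (\<lambda>s. even (ell ({1..d}-{i,j}) s)) = c
         \<and> subcell C {j} (\<lambda>s. odd (ell ({1..d}-{i,j}) s)) = c' then 1 else 0)"
  proof -
    have "S - L0 - {i} = {j}" if "i \<noteq> j" using that i j unfolding L0_def S_def by auto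
    thus ?thesis unfolding v_def f_def ind_mult L0_def S_def by auto
  qed
  finally show ?thesis .
qed

lemma cupint_eval:
  assumes d: "d \<ge> 2" and c: "is_cell d (d - 1) c" and i: "i \<in> {1..d}" and j: "j \<in> {1..d}"
    and sc: "snd c = {1..d} - {i}" and sc': "snd c' = {1..d} - {j}"
  shows "cupint d c c' = (if i \<noteq> j \<and>
     (fst c)(i := fst c i - (if even (ell ({1..d}-{i,j}) i) then 1 else 0),
             j := fst c j + (if odd (ell ({1..d}-{i,j}) j) then 1 else 0)) = fst c' then 1 else 0)"
proof -
  define p :: int where "p = (if even (ell ({1..d}-{i,j}) i) then 1 else 0)"
  define q :: int where "q = (if odd (ell ({1..d}-{i,j}) j) then 1 else 0)"
  define C0 where "C0 = ((fst c)(i := fst c i - p), {1..d})"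
  define cond where "cond = (i \<noteq> j \<and> (fst c)(i := fst c i - p, j := fst c j + q) = fst c')"
  have cz: "\<forall>k. k \<notin> {1..d} \<longrightarrow> fst c k = 0" using c unfolding is_cell_def by auto
  have C0cell: "is_cell d d C0" unfolding dcell_iff C0_def using cz i by auto
  have K: "{C. is_cell d d C \<and> odd (cup (d-2) (ind c) (ind c') C)} = (if cond then {C0} else {})"
  proof (intro set_eqI iffI)
    fix C assume "C \<in> {C. is_cell d d C \<and> odd (cup (d-2) (ind c) (ind c') C)}"
    hence Cc: "is_cell d d C" and od: "odd (cup (d-2) (ind c) (ind c') C)" by auto
    have sC: "snd C = {1..d}" using Cc dcell_iff by blast
    have h: "i \<noteq> j \<and> subcell C {i} (\<lambda>s. even (ell ({1..d}-{i,j}) s)) = c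
         \<and> subcell C {j} (\<lambda>s. odd (ell ({1..d}-{i,j}) s)) = c'"
      using od cup_eval[OF d i j sc sc' sC] by (auto split: if_splits)
    hence ij: "i \<noteq> j" and e1: "(fst C)(i := fst C i + p) = fst c" and e2: "(fst C)(j := fst C j + q) = fst c'"
      unfolding subcell_single p_def q_def by (auto simp: prod_eq_iff)
    have fC: "fst C = (fst c)(i := fst c i - p)"
      using e1 by (auto simp: fun_eq_iff split: if_splits)
    hence "C = C0" unfolding C0_def using sC by (simp add: prod_eq_iff)
    moreover have cond unfolding cond_def using ij e2 fC by (auto simp: fun_eq_iff)
    ultimately show "C \<in> (if cond then {C0} else {})" by simp
  next
    fix C assume "C \<in> (if cond then {C0} else {})"
    hence CC: "C = C0" and cd: cond by (auto split: if_splits)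
    have sC: "snd C0 = {1..d}" unfolding C0_def by simp
    have "subcell C0 {i} (\<lambda>s. even (ell ({1..d}-{i,j}) s)) = c"
      unfolding subcell_single C0_def using sc by (auto simp: prod_eq_iff p_def)
    moreover have "subcell C0 {j} (\<lambda>s. odd (ell ({1..d}-{i,j}) s)) = c'"
      unfolding subcell_single C0_def using sc' cd unfolding cond_def
      by (auto simp: prod_eq_iff q_def fun_eq_iff)
    ultimately have "cup (d-2) (ind c) (ind c') C0 = 1"
      using cup_eval[OF d i j sc sc' sC] cd unfolding cond_def by simp
    thus "C \<in> {C. is_cell d d C \<and> odd (cup (d-2) (ind c) (ind c') C)}" using CC C0cell by simp
  qed
  show ?thesis unfolding cupint_def integral_d_def K p_def[symmetric] q_def[symmetric] cond_def[symmetric]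
    by simp
qed

lemma ell_lo: assumes "1 \<le> i" "i < j" "j \<le> d" shows "ell ({1..d} - {i,j}) i = i - 1"
proof -
  have "{l \<in> {1..d} - {i,j}. l < i} = {1..<i}" using assms by auto
  thus ?thesis unfolding ell_def by simp
qed

lemma ell_hi: assumes "1 \<le> i" "i < j" "j \<le> d" shows "ell ({1..d} - {i,j}) j = j - 2"
proof -
  have "{l \<in> {1..d} - {i,j}. l < j} = {1..<j} - {i}" using assms by auto
  thus ?thesis unfolding ell_def using assms by simp
qed

lemma upd_eq1: "i \<noteq> j \<Longrightarrow> ((x::nat\<Rightarrow>int)(i := x i - a, j := x j + b) = y) \<longleftrightarrow> (x(i := x i - a) = y(j := y j - b))"
  by (auto simp: fun_eq_iff)

lemma upd_eq2: "i \<noteq> j \<Longrightarrow> ((y::nat\<Rightarrow>int)(j := y j - b, i := y i + a) = x) \<longleftrightarrow> (x(i := x i - a) = y(j := y j - b))"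
  by (auto simp: fun_eq_iff)

lemma Lc_eq: "perp d c = i \<Longrightarrow> Lc d c = ((fst c)(i := fst c i - (if odd (i + d) then 1 else 0)), {1..d})"
  by (auto simp: Lc_def adj_minus_def adj_plus_def)

lemma Rc_eq: "perp d c = i \<Longrightarrow> Rc d c = ((fst c)(i := fst c i - (if odd (i + d) then 0 else 1)), {1..d})"
  by (auto simp: Rc_def adj_minus_def adj_plus_def)

lemma key_lt:
  assumes d: "d \<ge> 2" and c: "is_cell d (d - 1) c" and c': "is_cell d (d - 1) c'"
    and i: "i \<in> {1..d}" and j: "j \<in> {1..d}"
    and sc: "snd c = {1..d} - {i}" and sc': "snd c' = {1..d} - {j}"
    and pc: "perp d c = i" and pc': "perp d c' = j" and ij: "i < j"
  shows "even (cupint d c c' + cupint d c' c + of_bool (Lc d c = Lc d c') + of_bool (Rc d c = Rc d c'))"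
proof -
  define x where "x = fst c"
  define y where "y = fst c'"
  have ne: "i \<noteq> j" using ij by simp
  have e1: "ell ({1..d} - {i,j}) i = i - 1" and e2: "ell ({1..d} - {i,j}) j = j - 2"
    using ell_lo ell_hi i j ij by auto
  have sw: "{1..d} - {j,i} = {1..d} - {i,j}" by auto
  define A1 :: int where "A1 = (if odd i then 1 else 0)"
  define B1 :: int where "B1 = (if odd j then 1 else 0)"
  define A2 :: int where "A2 = (if odd i then 0 else 1)"
  define B2 :: int where "B2 = (if odd j then 0 else 1)"
  have "even (i - 1) \<longleftrightarrow> odd i" "odd (j - 2) \<longleftrightarrow> odd j" "even (j - 2) \<longleftrightarrow> even j" "odd (i - 1) \<longleftrightarrow> even i"
    using i ij by (auto simp: even_diff_nat)
  hence pa: "(if even (i - 1) then 1 else 0) = A1" "(if odd (j - 2) then 1 else 0) = B1"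
    "(if even (j - 2) then 1 else 0) = B2" "(if odd (i - 1) then 1 else 0) = A2"
    unfolding A1_def B1_def A2_def B2_def by auto
  have cu1: "cupint d c c' = of_bool (x(i := x i - A1) = y(j := y j - B1))"
  proof -
    have "cupint d c c' = (if x(i := x i - A1, j := x j + B1) = y then 1 else 0)"
      using cupint_eval[OF d c i j sc sc'] ne unfolding e1 e2 pa x_def y_def by simp
    thus ?thesis using upd_eq1[OF ne, of x A1 B1 y] by simp
  qed
  have cu2: "cupint d c' c = of_bool (x(i := x i - A2) = y(j := y j - B2))"
  proof -
    have "cupint d c' c = (if y(j := y j - B2, i := y i + A2) = x then 1 else 0)"
      using cupint_eval[OF d c' j i sc' sc] ne unfolding sw e1 e2 pa x_def y_def by simp
    thus ?thesis using upd_eq2[OF ne, of y B2 A2 x] by simp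
  qed
  have L: "(Lc d c = Lc d c') = (x(i := x i - (if odd (i + d) then 1 else 0)) = y(j := y j - (if odd (j + d) then 1 else 0)))"
    unfolding Lc_eq[OF pc] Lc_eq[OF pc'] x_def y_def by simp
  have R: "(Rc d c = Rc d c') = (x(i := x i - (if odd (i + d) then 0 else 1)) = y(j := y j - (if odd (j + d) then 0 else 1)))"
    unfolding Rc_eq[OF pc] Rc_eq[OF pc'] x_def y_def by simp
  show ?thesis
  proof (cases "even d")
    case True
    hence "(Lc d c = Lc d c') = (x(i := x i - A1) = y(j := y j - B1))"
          "(Rc d c = Rc d c') = (x(i := x i - A2) = y(j := y j - B2))"
      unfolding L R A1_def B1_def A2_def B2_def by auto
    thus ?thesis unfolding cu1 cu2 by simp
  next
    case False
    hence "(Lc d c = Lc d c') = (x(i := x i - A2) = y(j := y j - B2))"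
          "(Rc d c = Rc d c') = (x(i := x i - A1) = y(j := y j - B1))"
      unfolding L R A1_def B1_def A2_def B2_def by auto
    thus ?thesis unfolding cu1 cu2 by simp
  qed
qed

lemma parity_all:
  assumes d: "d \<ge> 2" and c: "is_cell d (d - 1) c" and c': "is_cell d (d - 1) c'"
  shows "even (cupint d c c' + cupint d c' c + of_bool (Lc d c = Lc d c') + of_bool (Rc d c = Rc d c'))"
proof -
  obtain i where i: "i \<in> {1..d}" "snd c = {1..d} - {i}" "perp d c = i" using d1cell_perp[OF c] d by auto
  obtain j where j: "j \<in> {1..d}" "snd c' = {1..d} - {j}" "perp d c' = j" using d1cell_perp[OF c'] d by auto
  consider "i < j" | "j < i" | "i = j" by linarith
  then show ?thesis
  proof cases
    case 1 then show ?thesis using key_lt[OF d c c' i(1) j(1) i(2) j(2) i(3) j(3)] by simp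
  next
    case 2 then show ?thesis using key_lt[OF d c' c j(1) i(1) j(2) i(2) j(3) i(3)]
      by (simp add: eq_commute add_ac)
  next
    case 3
    have z1: "cupint d c c' = 0" using cupint_eval[OF d c i(1) j(1) i(2) j(2)] 3 by simp
    have z2: "cupint d c' c = 0" using cupint_eval[OF d c' j(1) i(1) j(2) i(2)] 3 by simp
    have "(Lc d c = Lc d c') = (fst c = fst c')" "(Rc d c = Rc d c') = (fst c = fst c')"
      unfolding Lc_eq[OF i(3)] Rc_eq[OF i(3)] Lc_eq[OF j(3)] Rc_eq[OF j(3)] 3
      by (auto simp: fun_eq_iff)
    then show ?thesis unfolding z1 z2 by simp
  qed
qed

lemma four:
  fixes a b a' b' s t :: "'a::ring_1"
  assumes h1: "a*a' = s*(a'*a)" and h2: "b*b' = t*(b'*b)" and h3: "a*b' = -(b'*a)" and h4: "b*a' = -(a'*b)"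
    and cs: "\<And>x. s*x = x*s" and ct: "\<And>x. t*x = x*t"
  shows "a*b*(a'*b') = (a'*b')*(a*b)*(s*t)"
proof -
  have "a*b*(a'*b') = a*(b*a')*b'" by (simp add: mult.assoc)
  also have "\<dots> = -(a*a'*(b*b'))" using h4 by (simp add: mult.assoc)
  also have "\<dots> = -(s*(a'*a)*(t*(b'*b)))" using h1 h2 by simp
  also have "\<dots> = -(s*t*(a'*(a*b')*b))" using ct by (simp add: mult.assoc)
  also have "\<dots> = s*t*(a'*b'*(a*b))" using h3 by (simp add: mult.assoc)
  also have "\<dots> = (a'*b')*(a*b)*(s*t)" using cs ct by (metis mult.assoc)
  finally show ?thesis .
qed



lemma foldr_X:
  fixes X Z :: "cell \<Rightarrow> 'b::ring_1"
  assumes XZ_same: "\<And>e. is_cell d (d - 1) e \<Longrightarrow> X e * Z e = - (Z e * X e)"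
    and XZ_comm: "\<And>e f. is_cell d (d - 1) e \<Longrightarrow> is_cell d (d - 1) f \<Longrightarrow> e \<noteq> f \<Longrightarrow> X e * Z f = Z f * X e"
    and e: "is_cell d (d - 1) e"
  shows "(\<forall>a\<in>set xs. is_cell d (d - 1) a) \<Longrightarrow> distinct xs \<Longrightarrow>
    foldr (\<lambda>c acc. Z c * acc) xs 1 * X e =
      (if e \<in> set xs then - (X e * foldr (\<lambda>c acc. Z c * acc) xs 1) else X e * foldr (\<lambda>c acc. Z c * acc) xs 1)"
proof (induction xs)
  case Nil
  then show ?case by simp
next
  case (Cons a xs)
  define P where "P = foldr (\<lambda>c acc. Z c * acc) xs 1"
  have IH: "P * X e = (if e \<in> set xs then - (X e * P) else X e * P)" using Cons unfolding P_def by auto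
  have a: "is_cell d (d - 1) a" using Cons by auto
  show ?case
  proof (cases "a = e")
    case True
    hence "e \<notin> set xs" using Cons by auto
    hence "Z a * P * X e = Z e * X e * P" using IH True by (simp add: mult.assoc)
    also have "\<dots> = - (X e * (Z e * P))"
    proof -
      have "Z e * X e = - (X e * Z e)" using XZ_same[OF e] by simp
      thus ?thesis by (simp add: mult.assoc[symmetric])
    qed
    finally show ?thesis using True unfolding P_def by simp
  next
    case False
    have zx: "Z a * X e = X e * Z a" using XZ_comm[OF e a] False by simp
    show ?thesis
    proof (cases "e \<in> set xs")
      case True
      hence "Z a * P * X e = - (Z a * X e * P)" using IH by (simp add: mult.assoc)
      also have "\<dots> = - (X e * (Z a * P))" using zx by (simp add: mult.assoc)
      finally show ?thesis using True unfolding P_def by simp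
    next
      case f2: False
      hence "Z a * P * X e = Z a * X e * P" using IH by (simp add: mult.assoc)
      also have "\<dots> = X e * (Z a * P)" using zx by (simp add: mult.assoc)
      finally show ?thesis using f2 False unfolding P_def by simp
    qed
  qed
qed

lemma foldr_Z:
  fixes Z :: "cell \<Rightarrow> 'b::ring_1"
  assumes ZZ_comm: "\<And>e f. is_cell d (d - 1) e \<Longrightarrow> is_cell d (d - 1) f \<Longrightarrow> Z e * Z f = Z f * Z e"
    and e: "is_cell d (d - 1) e"
  shows "(\<forall>a\<in>set xs. is_cell d (d - 1) a) \<Longrightarrow> Z e * foldr (\<lambda>c acc. Z c * acc) xs 1 = foldr (\<lambda>c acc. Z c * acc) xs 1 * Z e"
proof (induction xs)
  case (Cons a xs)
  define P where "P = foldr (\<lambda>c acc. Z c * acc) xs 1"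
  have h1: "Z e * Z a = Z a * Z e" using ZZ_comm e Cons.prems by auto
  have h2: "Z e * P = P * Z e" using Cons unfolding P_def by auto
  have "Z e * (Z a * P) = Z a * Z e * P" using h1 by (simp add: mult.assoc[symmetric])
  also have "\<dots> = Z a * P * Z e" using h2 by (simp add: mult.assoc)
  finally show ?case unfolding P_def by simp
qed simp

lemma foldr_comm:
  fixes Z :: "cell \<Rightarrow> 'b::ring_1"
  assumes ZZ_comm: "\<And>e f. is_cell d (d - 1) e \<Longrightarrow> is_cell d (d - 1) f \<Longrightarrow> Z e * Z f = Z f * Z e"
    and ys: "\<forall>a\<in>set ys. is_cell d (d - 1) a"
  shows "(\<forall>a\<in>set xs. is_cell d (d - 1) a) \<Longrightarrow>
    foldr (\<lambda>c acc. Z c * acc) xs 1 * foldr (\<lambda>c acc. Z c * acc) ys 1 = foldr (\<lambda>c acc. Z c * acc) ys 1 * foldr (\<lambda>c acc. Z c * acc) xs 1"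
proof (induction xs)
  case (Cons a xs)
  define P where "P = foldr (\<lambda>c acc. Z c * acc) xs 1"
  define Q where "Q = foldr (\<lambda>c acc. Z c * acc) ys 1"
  have h1: "Z a * Q = Q * Z a"
    using foldr_Z[where e=a and xs=ys, OF ZZ_comm] ys Cons.prems unfolding Q_def by auto
  have h2: "P * Q = Q * P" using Cons unfolding P_def Q_def by auto
  have "Z a * P * Q = Z a * Q * P" using h2 by (simp add: mult.assoc)
  also have "\<dots> = Q * (Z a * P)" using h1 by (simp add: mult.assoc)
  finally show ?case unfolding P_def Q_def by simp
qed simp

lemma cprod_list: "finite A \<Longrightarrow> \<exists>xs. set xs = A \<and> distinct xs \<and> cprod f A = foldr (\<lambda>c acc. f c * acc) xs 1"
  unfolding cprod_def using someI_ex[OF finite_distinct_list[of A]] by blast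

lemma upd_back:
  assumes ij: "i \<noteq> j" and h: "(y::nat\<Rightarrow>int)(j := y j - p, i := y i + q) = x"
  shows "y = x(i := x i - q, j := x j + p)"
proof (rule ext)
  fix k
  have hk: "\<And>k. (y(j := y j - p, i := y i + q)) k = x k" using h by simp
  have a: "y i + q = x i" using hk[of i] by simp
  have b: "y j - p = x j" using hk[of j] ij by simp
  show "y k = (x(i := x i - q, j := x j + p)) k"
  proof (cases "k = i")
    case True thus ?thesis using a ij by simp
  next
    case False
    thus ?thesis using b hk[of k] by (cases "k = j") auto
  qed
qed

lemma finite_A:
  assumes d: "d \<ge> 2" and c: "is_cell d (d - 1) c"
  shows "finite {c'. is_cell d (d - 1) c' \<and> cupint d c' c = 1}"
proof -
  obtain i where i: "i \<in> {1..d}" "snd c = {1..d} - {i}" "perp d c = i" using d1cell_perp[OF c] d by auto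
  define g where "g = (\<lambda>(j, e1, e2). ((fst c)(i := fst c i + e1, j := fst c j + e2), {1..d} - {j}))"
  have "{c'. is_cell d (d - 1) c' \<and> cupint d c' c = 1} \<subseteq> g ` ({1..d} \<times> {-1,0,1::int} \<times> {-1,0,1::int})"
  proof
    fix c' assume "c' \<in> {c'. is_cell d (d - 1) c' \<and> cupint d c' c = 1}"
    hence c': "is_cell d (d - 1) c'" and cu: "cupint d c' c = 1" by auto
    obtain j where j: "j \<in> {1..d}" "snd c' = {1..d} - {j}" using d1cell_perp[OF c'] d by auto
    define p :: int where "p = (if even (ell ({1..d}-{j,i}) j) then 1 else 0)"
    define q :: int where "q = (if odd (ell ({1..d}-{j,i}) i) then 1 else 0)"
    define cond where "cond = (j \<noteq> i \<and> (fst c')(j := fst c' j - p, i := fst c' i + q) = fst c)"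
    have ev: "cupint d c' c = (if cond then 1 else 0)"
      using cupint_eval[OF d c' j(1) i(1) j(2) i(2)] unfolding p_def q_def cond_def by simp
    have cond
    proof (rule ccontr)
      assume "\<not> cond" thus False using ev cu by simp
    qed
    hence "j \<noteq> i \<and> (fst c')(j := fst c' j - p, i := fst c' i + q) = fst c" unfolding cond_def .
    hence f1: "fst c' = (fst c)(i := fst c i - q, j := fst c j + p)"
      using upd_back[of i j "fst c'" p q "fst c"] by blast
    have g1: "g (j, -q, p) = ((fst c)(i := fst c i - q, j := fst c j + p), {1..d} - {j})"
      unfolding g_def by simp
    have "c' = g (j, -q, p)" unfolding g1 f1[symmetric] j(2)[symmetric] by simp
    moreover have "(j, -q, p) \<in> {1..d} \<times> {-1,0,1::int} \<times> {-1,0,1::int}" using j unfolding p_def q_def by auto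
    ultimately show "c' \<in> g ` ({1..d} \<times> {-1,0,1::int} \<times> {-1,0,1::int})" by blast
  qed
  moreover have "finite (g ` ({1..d} \<times> {-1,0,1::int} \<times> {-1,0,1::int}))"
    by (intro finite_imageI finite_cartesian_product) auto
  ultimately show ?thesis by (rule finite_subset)
qed

lemma cupint_01: "cupint d c c' = 0 \<or> cupint d c c' = 1"
  unfolding cupint_def integral_d_def by auto

lemma minus_one_pow: "(-1::'a::ring_1) ^ n = (if even n then 1 else -1)"
  by (induct n) auto



lemma LcRc_cell:
  assumes c: "is_cell d (d - 1) c" and p: "perp d c = i" and i: "i \<in> {1..d}"
  shows "is_cell d d (Lc d c)" "is_cell d d (Rc d c)"
proof -
  have cz: "\<forall>k. k \<notin> {1..d} \<longrightarrow> fst c k = 0" using c unfolding is_cell_def by auto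
  show "is_cell d d (Lc d c)" unfolding Lc_eq[OF p] dcell_iff using cz i by auto
  show "is_cell d d (Rc d c)" unfolding Rc_eq[OF p] dcell_iff using cz i by auto
qed

lemma central_sq:
  fixes iu M N :: "'a::ring_1"
  assumes "\<And>x. iu * x = x * iu"
  shows "(iu * M) * (iu * N) = iu * iu * (M * N)"
proof -
  have "(iu * M) * (iu * N) = iu * (M * iu) * N" by (simp add: mult.assoc)
  also have "\<dots> = iu * (iu * M) * N" using assms[of M] by simp
  also have "\<dots> = iu * iu * (M * N)" by (simp add: mult.assoc)
  finally show ?thesis .
qed

lemma sign_parity:
  assumes "even (m + n)" shows "(-1::'a::ring_1) ^ m = (-1) ^ n"
  using assms unfolding minus_one_pow by auto

theorem lemma1:
  fixes d :: nat
    and iu :: "'a::ring_1" and adj :: "'a \<Rightarrow> 'a"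
    and \<gamma> \<gamma>' :: "cell \<Rightarrow> 'a"
    and X Z :: "cell \<Rightarrow> 'b::ring_1"
    and c c' :: cell
  assumes d2: "d \<ge> 2"
    (* imaginary unit: central, squares to -1; adjoint: involutive antilinear anti-automorphism *)
    and iu_sq: "iu * iu = -1"
    and iu_central: "\<And>x. iu * x = x * iu"
    and adj_adj: "\<And>x. adj (adj x) = x"
    and adj_add: "\<And>x y. adj (x + y) = adj x + adj y"
    and adj_mult: "\<And>x y. adj (x * y) = adj y * adj x"
    and adj_one: "adj 1 = 1"
    and adj_iu: "adj iu = - iu"
    (* Majorana operators on d-cells: Hermitian, square to 1, pairwise anticommute *)
    and herm: "\<And>C. is_cell d d C \<Longrightarrow> adj (\<gamma> C) = \<gamma> C"
    and herm': "\<And>C. is_cell d d C \<Longrightarrow> adj (\<gamma>' C) = \<gamma>' C"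
    and sq: "\<And>C. is_cell d d C \<Longrightarrow> \<gamma> C * \<gamma> C = 1"
    and sq': "\<And>C. is_cell d d C \<Longrightarrow> \<gamma>' C * \<gamma>' C = 1"
    and anti: "\<And>C D. is_cell d d C \<Longrightarrow> is_cell d d D \<Longrightarrow> C \<noteq> D \<Longrightarrow>
                 \<gamma> C * \<gamma> D = - (\<gamma> D * \<gamma> C)"
    and anti': "\<And>C D. is_cell d d C \<Longrightarrow> is_cell d d D \<Longrightarrow> C \<noteq> D \<Longrightarrow>
                 \<gamma>' C * \<gamma>' D = - (\<gamma>' D * \<gamma>' C)"
    and anti_mixed: "\<And>C D. is_cell d d C \<Longrightarrow> is_cell d d D \<Longrightarrow>
                 \<gamma> C * \<gamma>' D = - (\<gamma>' D * \<gamma> C)"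
    (* Pauli operators on (d-1)-cells *)
    and X_sq: "\<And>e. is_cell d (d - 1) e \<Longrightarrow> X e * X e = 1"
    and Z_sq: "\<And>e. is_cell d (d - 1) e \<Longrightarrow> Z e * Z e = 1"
    and XZ_same: "\<And>e. is_cell d (d - 1) e \<Longrightarrow> X e * Z e = - (Z e * X e)"
    and XX_comm: "\<And>e f. is_cell d (d - 1) e \<Longrightarrow> is_cell d (d - 1) f \<Longrightarrow> X e * X f = X f * X e"
    and ZZ_comm: "\<And>e f. is_cell d (d - 1) e \<Longrightarrow> is_cell d (d - 1) f \<Longrightarrow> Z e * Z f = Z f * Z e"
    and XZ_comm: "\<And>e f. is_cell d (d - 1) e \<Longrightarrow> is_cell d (d - 1) f \<Longrightarrow> e \<noteq> f \<Longrightarrow>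
                   X e * Z f = Z f * X e"
    and c: "is_cell d (d - 1) c" and c': "is_cell d (d - 1) c'"
  shows "(Sop d iu \<gamma> \<gamma>' c * Sop d iu \<gamma> \<gamma>' c'
           = Sop d iu \<gamma> \<gamma>' c' * Sop d iu \<gamma> \<gamma>' c * (-1) ^ (cupint d c c' + cupint d c' c)) \<and>
         (Uop d X Z c * Uop d X Z c'
           = Uop d X Z c' * Uop d X Z c * (-1) ^ (cupint d c c' + cupint d c' c))"
proof -
  have d1: "d \<ge> 1" using d2 by simp
  obtain i where i: "i \<in> {1..d}" "snd c = {1..d} - {i}" "perp d c = i" using d1cell_perp[OF c d1] by auto
  obtain j where j: "j \<in> {1..d}" "snd c' = {1..d} - {j}" "perp d c' = j" using d1cell_perp[OF c' d1] by auto
  have par: "(-1::'a) ^ (cupint d c c' + cupint d c' c) =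
      (-1) ^ (of_bool (Lc d c = Lc d c') + of_bool (Rc d c = Rc d c'))"
    by (rule sign_parity) (use parity_all[OF d2 c c'] in \<open>simp add: add.assoc\<close>)
  have part1: "Sop d iu \<gamma> \<gamma>' c * Sop d iu \<gamma> \<gamma>' c'
           = Sop d iu \<gamma> \<gamma>' c' * Sop d iu \<gamma> \<gamma>' c * (-1) ^ (cupint d c c' + cupint d c' c)"
  proof -
    define A where "A = Lc d c"
    define B where "B = Rc d c"
    define A' where "A' = Lc d c'"
    define B' where "B' = Rc d c'"
    have cA: "is_cell d d A" "is_cell d d B" using LcRc_cell[OF c i(3) i(1)] unfolding A_def B_def by auto
    have cA': "is_cell d d A'" "is_cell d d B'" using LcRc_cell[OF c' j(3) j(1)] unfolding A'_def B'_def by auto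
    define s :: 'a where "s = (if A = A' then 1 else -1)"
    define t :: 'a where "t = (if B = B' then 1 else -1)"
    have h1: "\<gamma> A * \<gamma> A' = s * (\<gamma> A' * \<gamma> A)"
      using anti[OF cA(1) cA'(1)] unfolding s_def by auto
    have h2: "\<gamma>' B * \<gamma>' B' = t * (\<gamma>' B' * \<gamma>' B)"
      using anti'[OF cA(2) cA'(2)] unfolding t_def by auto
    have h3: "\<gamma> A * \<gamma>' B' = - (\<gamma>' B' * \<gamma> A)" using anti_mixed[OF cA(1) cA'(2)] .
    have h4: "\<gamma>' B * \<gamma> A' = - (\<gamma> A' * \<gamma>' B)" using anti_mixed[OF cA'(1) cA(2)] by simp
    have cs: "\<And>x. s * x = x * s" unfolding s_def by auto
    have ct: "\<And>x. t * x = x * t" unfolding t_def by auto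
    have F: "\<gamma> A * \<gamma>' B * (\<gamma> A' * \<gamma>' B') = (\<gamma> A' * \<gamma>' B') * (\<gamma> A * \<gamma>' B) * (s * t)"
      by (rule four[OF h1 h2 h3 h4 cs ct])
    have st: "s * t = (-1) ^ (cupint d c c' + cupint d c' c)"
      unfolding par A_def[symmetric] B_def[symmetric] A'_def[symmetric] B'_def[symmetric] s_def t_def
      by auto
    have "Sop d iu \<gamma> \<gamma>' c * Sop d iu \<gamma> \<gamma>' c' = iu * iu * (\<gamma> A * \<gamma>' B * (\<gamma> A' * \<gamma>' B'))"
      unfolding Sop_def A_def B_def A'_def B'_def by (rule central_sq[OF iu_central])
    also have "\<dots> = iu * iu * ((\<gamma> A' * \<gamma>' B') * (\<gamma> A * \<gamma>' B)) * (s * t)"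
      unfolding F by (simp add: mult.assoc)
    also have "iu * iu * ((\<gamma> A' * \<gamma>' B') * (\<gamma> A * \<gamma>' B)) = Sop d iu \<gamma> \<gamma>' c' * Sop d iu \<gamma> \<gamma>' c"
      unfolding Sop_def A_def B_def A'_def B'_def by (rule central_sq[OF iu_central, symmetric])
    finally show ?thesis unfolding st .
  qed
  have part2: "Uop d X Z c * Uop d X Z c'
           = Uop d X Z c' * Uop d X Z c * (-1) ^ (cupint d c c' + cupint d c' c)"
  proof -
    define Ac where "Ac = {e. is_cell d (d - 1) e \<and> cupint d e c = 1}"
    define Ac' where "Ac' = {e. is_cell d (d - 1) e \<and> cupint d e c' = 1}"
    have fA: "finite Ac" "finite Ac'" unfolding Ac_def Ac'_def using finite_A[OF d2 c] finite_A[OF d2 c'] by auto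
    obtain xs where xs: "set xs = Ac" "distinct xs" "cprod Z Ac = foldr (\<lambda>c acc. Z c * acc) xs 1"
      using cprod_list[OF fA(1)] by blast
    obtain ys where ys: "set ys = Ac'" "distinct ys" "cprod Z Ac' = foldr (\<lambda>c acc. Z c * acc) ys 1"
      using cprod_list[OF fA(2)] by blast
    define P where "P = cprod Z Ac"
    define P' where "P' = cprod Z Ac'"
    have xsc: "\<forall>a\<in>set xs. is_cell d (d - 1) a" using xs(1) unfolding Ac_def by auto
    have ysc: "\<forall>a\<in>set ys. is_cell d (d - 1) a" using ys(1) unfolding Ac'_def by auto
    have F1: "P * X c' = (if cupint d c' c = 1 then - (X c' * P) else X c' * P)"
    proof -
      have "foldr (\<lambda>c acc. Z c * acc) xs 1 * X c' = (if c' \<in> set xs then - (X c' * foldr (\<lambda>c acc. Z c * acc) xs 1) else X c' * foldr (\<lambda>c acc. Z c * acc) xs 1)"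
        by (rule foldr_X[where d=d and X=X and Z=Z and e=c' and xs=xs, OF XZ_same XZ_comm c' xsc xs(2)])
      moreover have "(c' \<in> set xs) = (cupint d c' c = 1)" using xs(1) c' unfolding Ac_def by simp
      ultimately show ?thesis unfolding P_def xs(3) by simp
    qed
    have F2: "P' * X c = (if cupint d c c' = 1 then - (X c * P') else X c * P')"
    proof -
      have "foldr (\<lambda>c acc. Z c * acc) ys 1 * X c = (if c \<in> set ys then - (X c * foldr (\<lambda>c acc. Z c * acc) ys 1) else X c * foldr (\<lambda>c acc. Z c * acc) ys 1)"
        by (rule foldr_X[where d=d and X=X and Z=Z and e=c and xs=ys, OF XZ_same XZ_comm c ysc ys(2)])
      moreover have "(c \<in> set ys) = (cupint d c c' = 1)" using ys(1) c unfolding Ac'_def by simp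
      ultimately show ?thesis unfolding P'_def ys(3) by simp
    qed
    have F3: "X c * X c' = X c' * X c" using XX_comm[OF c c'] .
    have F4: "P * P' = P' * P" unfolding P_def P'_def xs(3) ys(3) by (rule foldr_comm[where d=d and Z=Z and ys=ys and xs=xs, OF ZZ_comm ysc xsc])
    define W where "W = X c * X c' * (P * P')"
    have W': "X c' * X c * (P' * P) = W" unfolding W_def F3 F4 ..
    have L: "X c * P * (X c' * P') = (if cupint d c' c = 1 then - W else W)"
    proof -
      have "X c * P * (X c' * P') = X c * (P * X c') * P'" by (simp add: mult.assoc)
      thus ?thesis unfolding F1 W_def by (simp add: mult.assoc)
    qed
    have R: "X c' * P' * (X c * P) = (if cupint d c c' = 1 then - W else W)"
    proof -
      have "X c' * P' * (X c * P) = X c' * (P' * X c) * P" by (simp add: mult.assoc)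
      thus ?thesis unfolding F2 W'[symmetric] by (simp add: mult.assoc)
    qed
    have U1: "Uop d X Z c * Uop d X Z c' = X c * P * (X c' * P')"
      unfolding Uop_def P_def P'_def Ac_def Ac'_def ..
    have U2: "Uop d X Z c' * Uop d X Z c = X c' * P' * (X c * P)"
      unfolding Uop_def P_def P'_def Ac_def Ac'_def ..
    show ?thesis unfolding U1 U2 L R
      using cupint_01[of d c c'] cupint_01[of d c' c] by auto
  qed
  show ?thesis using part1 part2 by simp
qed

end
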